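(* Let $p\ge 0$, let $(\kappa_i)_{i\ge1}$ be a sequence with $C^{-1}i^{-p}\le \kappa_i\le C i^{-p}$ for all $i$ and some $C\ge 1$, let $\mu_0=(\mu_{0,i})_{i\ge1}\in\ell_2$, and for $n\ge 2$ define $h_n:(0,\infty)\to[0,\infty)$ by \[ h_n(\alpha)=\frac{1+2\alpha+2p}{n^{1/(1+2\alpha+2p)}\log n}\sum_{i=1}^{\infty}\frac{n^2 i^{1+2\alpha}\mu_{0,i}^2\log i}{(i^{1+2\alpha}\kappa_i^{-2}+n)^2}. \] For constants $0<l<L$ put \[ \underline{\alpha}_n=\inf\{\alpha>0: h_n(\alpha)>l\}\wedge\sqrt{\log n},\qquad \overline{\alpha}_n=\inf\{\alpha>0: h_n(\alpha)>L(\log n)^2\}. \] Then for any $l,L>0$ the following hold. (i) For all $\beta,R>0$ there exists $c_0>0$ such that $\inf_{\|\mu_0\|_\beta\le R}\underline{\alpha}_n\ge \beta-\frac{c_0}{\log n}$ for all $n$ large enough. (ii) For all $\gamma,R>0$, $\inf_{\|\mu_0\|_{A^\gamma}\le R}\underline{\alpha}_n\ge \frac{\sqrt{\log n}}{\log\log n}$ for all $n$ large enough. (iii) If $\mu_{0,i}\ge c\, i^{-\gamma-1/2}$ for all $i$, for some $c,\gamma>0$, then for a constant $C_0>0$ depending only on $c$ and $\gamma$ we have $\overline{\alpha}_n\le \gamma+C_0\frac{\log\log n}{\log n}$ for all $n$ large enough. (iv) If $\mu_{0,i}\ne 0$ for some $i\ge 2$, then $\overline{\alpha}_n\le \frac{\log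 n}{2\log 2}-\frac12-p$ for all $n$ large enough.
   Context: For $\mu\in\ell_2$ and $\beta,\gamma\ge0$: the Sobolev norm is $\|\mu\|_\beta^2=\sum_{i\ge1} i^{2\beta}\mu_i^2$ and the analytic norm is $\|\mu\|_{A^\gamma}^2=\sum_{i\ge1}e^{2\gamma i}\mu_i^2$. $a\wedge b=\min(a,b)$. The infimum of the empty set is $+\infty$. *)

theory Defs
  imports "HOL-Analysis.Analysis" "HOL-Library.Extended_Real"
begin

text \<open>Sequences are indexed from 1: a sequence is a function nat => real whose
  value at 0 is ignored. Sums over i >= 1 are written as sums over Suc i.\<close>

definition in_l2 :: "(nat \<Rightarrow> real) \<Rightarrow> bool" where
  "in_l2 \<mu> \<longleftrightarrow> summable (\<lambda>i. (\<mu> (Suc i))\<^sup>2)"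

definition sobolev_finite :: "real \<Rightarrow> (nat \<Rightarrow> real) \<Rightarrow> bool" where
  "sobolev_finite \<beta> \<mu> \<longleftrightarrow> summable (\<lambda>i. real (Suc i) powr (2*\<beta>) * (\<mu> (Suc i))\<^sup>2)"

definition sobolev_norm :: "real \<Rightarrow> (nat \<Rightarrow> real) \<Rightarrow> real" where
  "sobolev_norm \<beta> \<mu> = sqrt (\<Sum>i. real (Suc i) powr (2*\<beta>) * (\<mu> (Suc i))\<^sup>2)"

definition analytic_finite :: "real \<Rightarrow> (nat \<Rightarrow> real) \<Rightarrow> bool" where
  "analytic_finite \<gamma> \<mu> \<longleftrightarrow> summable (\<lambda>i. exp (2*\<gamma>*real (Suc i)) * (\<mu> (Suc i))\<^sup>2)"

definition analytic_norm :: "real \<Rightarrow> (nat \<Rightarrow> real) \<Rightarrow> real" where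
  "analytic_norm \<gamma> \<mu> = sqrt (\<Sum>i. exp (2*\<gamma>*real (Suc i)) * (\<mu> (Suc i))\<^sup>2)"

definition hfun :: "real \<Rightarrow> (nat \<Rightarrow> real) \<Rightarrow> (nat \<Rightarrow> real) \<Rightarrow> nat \<Rightarrow> real \<Rightarrow> real" where
  "hfun p \<kappa> \<mu> n \<alpha> =
     (1 + 2*\<alpha> + 2*p) / (real n powr (1 / (1 + 2*\<alpha> + 2*p)) * ln (real n)) *
     (\<Sum>i. (real n)\<^sup>2 * real (Suc i) powr (1 + 2*\<alpha>) * (\<mu> (Suc i))\<^sup>2 * ln (real (Suc i))
           / (real (Suc i) powr (1 + 2*\<alpha>) / (\<kappa> (Suc i))\<^sup>2 + real n)\<^sup>2)"

text \<open>Lower and upper alphas, as extended reals (inf of the empty set is +infinity).\<close>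
definition alpha_lower :: "real \<Rightarrow> (nat \<Rightarrow> real) \<Rightarrow> real \<Rightarrow> (nat \<Rightarrow> real) \<Rightarrow> nat \<Rightarrow> ereal" where
  "alpha_lower p \<kappa> l \<mu> n =
     min (Inf {ereal \<alpha> | \<alpha>. \<alpha> > 0 \<and> hfun p \<kappa> \<mu> n \<alpha> > l}) (ereal (sqrt (ln (real n))))"

definition alpha_upper :: "real \<Rightarrow> (nat \<Rightarrow> real) \<Rightarrow> real \<Rightarrow> (nat \<Rightarrow> real) \<Rightarrow> nat \<Rightarrow> ereal" where
  "alpha_upper p \<kappa> L \<mu> n =
     Inf {ereal \<alpha> | \<alpha>. \<alpha> > 0 \<and> hfun p \<kappa> \<mu> n \<alpha> > L * (ln (real n))\<^sup>2}"

end

theory Submission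
  imports Defs "HOL-Real_Asymp.Real_Asymp"
begin


lemma term_upper:
  fixes j C p \<alpha> m n k :: real
  assumes j: "j \<ge> 1" and C: "C \<ge> 1" and k1: "k \<le> C * j powr (-p)" and k2: "j powr (-p) / C \<le> k" and n: "n > 0"
  shows "n\<^sup>2 * j powr (1+2*\<alpha>) * m\<^sup>2 * ln j / (j powr (1+2*\<alpha>) / k\<^sup>2 + n)\<^sup>2
     \<le> C^4 * (n\<^sup>2 * j powr (1+2*\<alpha>) * m\<^sup>2 * ln j / (j powr (1+2*\<alpha>+2*p) + n)\<^sup>2)"
proof -
  have "j powr (-p) / C > 0" using C j by simp
  hence kp: "k > 0" using k2 by linarith
  have "k\<^sup>2 \<le> (C * j powr (-p))\<^sup>2" using kp k1 by (intro power_mono) auto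
  also have "\<dots> = C\<^sup>2 / j powr (2*p)"
  proof -
    have "(j powr (-p))\<^sup>2 = j powr (-p) * j powr (-p)" by (simp add: power2_eq_square)
    also have "\<dots> = j powr (-(2*p))" by (simp flip: powr_add)
    finally show ?thesis by (simp add: power_mult_distrib powr_minus divide_inverse)
  qed
  finally have k3: "k\<^sup>2 \<le> C\<^sup>2 / j powr (2*p)" .
  have jp: "j powr (1+2*\<alpha>+2*p) = j powr (1+2*\<alpha>) * j powr (2*p)" by (simp add: powr_add)
  have "j powr (1+2*\<alpha>+2*p) / C\<^sup>2 \<le> j powr (1+2*\<alpha>) / k\<^sup>2"
  proof -
    have "j powr (1+2*\<alpha>) / (C\<^sup>2 / j powr (2*p)) \<le> j powr (1+2*\<alpha>) / k\<^sup>2"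
      using kp k3 C j by (intro divide_left_mono) (simp_all add: divide_pos_pos)
    thus ?thesis using jp by (simp add: field_simps)
  qed
  hence D: "(j powr (1+2*\<alpha>+2*p) + n) / C\<^sup>2 \<le> j powr (1+2*\<alpha>) / k\<^sup>2 + n"
  proof -
    have c1: "1 \<le> C\<^sup>2" using C by (simp add: one_le_power)
    have "n * 1 \<le> n * C\<^sup>2" using c1 n by (intro mult_left_mono) auto
    hence "n / C\<^sup>2 \<le> n" using c1 by (subst pos_divide_le_eq) auto
    thus ?thesis using \<open>j powr (1+2*\<alpha>+2*p) / C\<^sup>2 \<le> j powr (1+2*\<alpha>) / k\<^sup>2\<close> by (simp add: add_divide_distrib)
  qed
  have "0 < j powr (1+2*\<alpha>+2*p) + n" using n by (simp add: add_nonneg_pos)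
  hence D0: "0 < (j powr (1+2*\<alpha>+2*p) + n) / C\<^sup>2" using C by (intro divide_pos_pos) auto
  have D2: "((j powr (1+2*\<alpha>+2*p) + n) / C\<^sup>2)\<^sup>2 \<le> (j powr (1+2*\<alpha>) / k\<^sup>2 + n)\<^sup>2"
    using D D0 by (intro power_mono) auto
  have X: "0 \<le> n\<^sup>2 * j powr (1+2*\<alpha>) * m\<^sup>2 * ln j" using j by simp
  have "n\<^sup>2 * j powr (1+2*\<alpha>) * m\<^sup>2 * ln j / (j powr (1+2*\<alpha>) / k\<^sup>2 + n)\<^sup>2
     \<le> n\<^sup>2 * j powr (1+2*\<alpha>) * m\<^sup>2 * ln j / ((j powr (1+2*\<alpha>+2*p) + n) / C\<^sup>2)\<^sup>2"
  proof -
    have "0 < ((j powr (1+2*\<alpha>+2*p) + n) / C\<^sup>2)\<^sup>2" using D0 by (rule zero_less_power)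
    moreover have "0 < (j powr (1+2*\<alpha>) / k\<^sup>2 + n)\<^sup>2" using D D0 by (intro zero_less_power) linarith
    ultimately show ?thesis using X D2 by (intro divide_left_mono) auto
  qed
  also have "\<dots> = C^4 * (n\<^sup>2 * j powr (1+2*\<alpha>) * m\<^sup>2 * ln j / (j powr (1+2*\<alpha>+2*p) + n)\<^sup>2)"
    using C by (simp add: power_divide field_simps)
  finally show ?thesis .
qed

lemma term_lower:
  fixes j C p \<alpha> m n k :: real
  assumes j: "j \<ge> 1" and C: "C \<ge> 1" and k1: "k \<le> C * j powr (-p)" and k2: "j powr (-p) / C \<le> k" and n: "n > 0"
  shows "n\<^sup>2 * j powr (1+2*\<alpha>) * m\<^sup>2 * ln j / (C\<^sup>2 * j powr (1+2*\<alpha>+2*p) + n)\<^sup>2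
     \<le> n\<^sup>2 * j powr (1+2*\<alpha>) * m\<^sup>2 * ln j / (j powr (1+2*\<alpha>) / k\<^sup>2 + n)\<^sup>2"
proof -
  have "j powr (-p) / C > 0" using C j by simp
  hence kp: "k > 0" using k2 by linarith
  have "(j powr (-p) / C)\<^sup>2 \<le> k\<^sup>2" using k2 C by (intro power_mono) auto
  moreover have "(j powr (-p) / C)\<^sup>2 = 1 / (C\<^sup>2 * j powr (2*p))"
  proof -
    have "(j powr (-p))\<^sup>2 = j powr (-p) * j powr (-p)" by (simp add: power2_eq_square)
    also have "\<dots> = j powr (-(2*p))" by (simp flip: powr_add)
    finally show ?thesis by (simp add: power_divide powr_minus divide_inverse power_mult_distrib)  (simp add: power_inverse[symmetric])
  qed
  ultimately have k3: "1 / (C\<^sup>2 * j powr (2*p)) \<le> k\<^sup>2" by simp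
  have jp: "j powr (1+2*\<alpha>+2*p) = j powr (1+2*\<alpha>) * j powr (2*p)" by (simp add: powr_add)
  have "j powr (1+2*\<alpha>) / k\<^sup>2 \<le> j powr (1+2*\<alpha>) / (1 / (C\<^sup>2 * j powr (2*p)))"
    using k3 C j kp by (intro divide_left_mono) (simp_all add: divide_pos_pos)
  hence "j powr (1+2*\<alpha>) / k\<^sup>2 \<le> C\<^sup>2 * j powr (1+2*\<alpha>+2*p)" using jp by (simp add: field_simps)
  hence D: "j powr (1+2*\<alpha>) / k\<^sup>2 + n \<le> C\<^sup>2 * j powr (1+2*\<alpha>+2*p) + n" by simp
  have D0: "0 < j powr (1+2*\<alpha>) / k\<^sup>2 + n" using n kp by (simp add: add_nonneg_pos)
  have D2: "(j powr (1+2*\<alpha>) / k\<^sup>2 + n)\<^sup>2 \<le> (C\<^sup>2 * j powr (1+2*\<alpha>+2*p) + n)\<^sup>2"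
    using D D0 by (intro power_mono) auto
  have X: "0 \<le> n\<^sup>2 * j powr (1+2*\<alpha>) * m\<^sup>2 * ln j" using j by simp
  have "0 < (C\<^sup>2 * j powr (1+2*\<alpha>+2*p) + n)\<^sup>2 * (j powr (1+2*\<alpha>) / k\<^sup>2 + n)\<^sup>2"
    using D D0 by (intro mult_pos_pos) auto
  then show ?thesis using X D2 D0 by (intro divide_left_mono) auto
qed



lemma weight_sob:
  fixes j n \<alpha> \<beta> p :: real
  assumes j: "j \<ge> 1" and n: "n \<ge> 1" and \<alpha>: "\<alpha> > 0" and \<beta>: "\<beta> > 0" and p: "p \<ge> 0"
  defines "a \<equiv> 1 + 2*\<alpha> + 2*p"
  defines "N \<equiv> n powr (1/a)"
  defines "b \<equiv> 1 + 2*\<alpha> - 2*\<beta>"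
  shows "n\<^sup>2 * j powr (1+2*\<alpha>) * ln j / (j powr a + n)\<^sup>2 \<le> j powr (2*\<beta>) * ((N powr b + 1) * (ln N + 1))"
proof -
  have a0: "a > 0" unfolding a_def using \<alpha> p by simp
  have N1: "N \<ge> 1" unfolding N_def using n a0 by (simp add: ge_one_powr_ge_zero)
  have nN: "n = N powr a" unfolding N_def using n a0 by (simp add: powr_powr)
  have jb: "j powr (1+2*\<alpha>) = j powr (2*\<beta>) * j powr b" unfolding b_def by (simp flip: powr_add)
  have lnN: "ln N \<ge> 0" using N1 by simp
  have Nb0: "N powr b \<ge> 0" by simp
  show ?thesis
  proof (cases "j \<le> N")
    case True
    have q0: "n\<^sup>2 \<le> (j powr a + n)\<^sup>2" using n by (intro power_mono) auto
    have q: "n\<^sup>2 / (j powr a + n)\<^sup>2 \<le> 1" using q0 n by (simp add: divide_le_eq_1)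
    have jbb: "j powr b \<le> N powr b + 1"
    proof (cases "b \<ge> 0")
      case True
      have "j powr b \<le> N powr b" using True \<open>j \<le> N\<close> j by (intro powr_mono2) auto
      thus ?thesis by linarith
    next
      case False
      have "j powr b \<le> j powr 0" using j False by (intro powr_mono) auto
      moreover have "j powr 0 = 1" using j by simp
      ultimately show ?thesis using Nb0 by linarith
    qed
    have "ln j \<le> ln N" using \<open>j \<le> N\<close> j by (subst ln_le_cancel_iff) auto
    hence lj: "ln j \<le> ln N + 1" by linarith
    have "n\<^sup>2 * j powr (1+2*\<alpha>) * ln j / (j powr a + n)\<^sup>2 = j powr (2*\<beta>) * (j powr b * ln j * (n\<^sup>2 / (j powr a + n)\<^sup>2))"
      using jb by simp
    also have "\<dots> \<le> j powr (2*\<beta>) * ((N powr b + 1) * (ln N + 1) * 1)"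
      using jbb lj q j lnN Nb0 by (intro mult_left_mono mult_mono) auto
    finally show ?thesis by simp
  next
    case False
    define t where "t = j / N"
    have t1: "t \<ge> 1" unfolding t_def using False N1 by simp
    have jt: "j = N * t" unfolding t_def using N1 by simp
    have den: "j powr (2*a) \<le> (j powr a + n)\<^sup>2"
    proof -
      have "j powr (2*a) = (j powr a)\<^sup>2" by (simp add: power2_eq_square flip: powr_add)
      also have "\<dots> \<le> (j powr a + n)\<^sup>2" using n by (intro power_mono) auto
      finally show ?thesis .
    qed
    have num: "0 \<le> n\<^sup>2 * j powr (1+2*\<alpha>) * ln j" using j by simp
    have "n\<^sup>2 * j powr (1+2*\<alpha>) * ln j / (j powr a + n)\<^sup>2 \<le> n\<^sup>2 * j powr (1+2*\<alpha>) * ln j / j powr (2*a)"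
    proof -
      have "0 < j powr a + n" using n by (simp add: add_nonneg_pos)
      hence "0 < (j powr a + n)\<^sup>2 * j powr (2*a)" using j by simp
      thus ?thesis using den num j by (intro divide_left_mono) auto
    qed
    also have "\<dots> = j powr (2*\<beta>) * (n\<^sup>2 * j powr (b - 2*a) * ln j)"
      using jb j by (simp add: powr_diff)
    also have "n\<^sup>2 * j powr (b - 2*a) * ln j = N powr b * (t powr (b - 2*a) * (ln N + ln t))"
    proof -
      have h1: "n\<^sup>2 = N powr (2*a)" using nN by (simp add: power2_eq_square flip: powr_add)
      have h2: "j powr (b-2*a) = N powr (b-2*a) * t powr (b-2*a)" using jt N1 t1 by (simp add: powr_mult)
      have h3: "ln j = ln N + ln t" using jt N1 t1 by (simp add: ln_mult)
      have h4: "N powr (2*a) * N powr (b-2*a) = N powr b" by (simp flip: powr_add)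
      have "n\<^sup>2 * j powr (b - 2*a) * ln j = (N powr (2*a) * N powr (b-2*a)) * (t powr (b-2*a) * (ln N + ln t))"
        unfolding h1 h2 h3 by (simp only: mult_ac)
      then show ?thesis unfolding h4 .
    qed
    also have "t powr (b - 2*a) * (ln N + ln t) \<le> ln N + 1"
    proof -
      have e: "b - 2*a \<le> -1" unfolding a_def b_def using \<alpha> \<beta> p by simp
      have "t powr (b - 2*a) \<le> t powr 0" using t1 e by (intro powr_mono) auto
      hence t0: "t powr (b - 2*a) \<le> 1" using t1 by simp
      have t2: "t powr (b - 2*a) \<le> t powr (-1)" using t1 e by (intro powr_mono) auto
      have lt: "ln t \<le> t" using t1 ln_le_minus_one[of t] by linarith
      have lt0: "ln t \<ge> 0" using t1 by simp
      have "t powr (b - 2*a) * ln t \<le> t powr (-1) * ln t" using t2 lt0 by (intro mult_right_mono)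
      also have "\<dots> = ln t / t" using t1 by (simp add: powr_minus divide_inverse)
      also have "\<dots> \<le> 1" using lt t1 by simp
      finally have "t powr (b - 2*a) * ln t \<le> 1" .
      moreover have "t powr (b - 2*a) * ln N \<le> ln N" using t0 lnN by (simp add: mult_left_le_one_le)
      ultimately show ?thesis by (simp add: distrib_left)
    qed
    hence "N powr b * (t powr (b - 2*a) * (ln N + ln t)) \<le> N powr b * (ln N + 1)"
      using Nb0 by (intro mult_left_mono)
    hence "j powr (2*\<beta>) * (N powr b * (t powr (b - 2*a) * (ln N + ln t))) \<le> j powr (2*\<beta>) * ((N powr b + 1) * (ln N + 1))"
      using lnN Nb0 by (intro mult_left_mono) (auto simp: algebra_simps)
    finally show ?thesis by simp
  qed
qed



definition hs :: "(nat \<Rightarrow> real) \<Rightarrow> (nat \<Rightarrow> real) \<Rightarrow> nat \<Rightarrow> real \<Rightarrow> nat \<Rightarrow> real" where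
  "hs \<kappa> \<mu> n \<alpha> i = (real n)\<^sup>2 * real (Suc i) powr (1 + 2*\<alpha>) * (\<mu> (Suc i))\<^sup>2 * ln (real (Suc i))
           / (real (Suc i) powr (1 + 2*\<alpha>) / (\<kappa> (Suc i))\<^sup>2 + real n)\<^sup>2"

lemma hfun_alt: "hfun p \<kappa> \<mu> n \<alpha> = (1 + 2*\<alpha> + 2*p) / (real n powr (1 / (1 + 2*\<alpha> + 2*p)) * ln (real n)) * (\<Sum>i. hs \<kappa> \<mu> n \<alpha> i)"
  unfolding hfun_def hs_def ..

lemma hs_nonneg: "hs \<kappa> \<mu> n \<alpha> i \<ge> 0"
  unfolding hs_def by (intro divide_nonneg_nonneg mult_nonneg_nonneg) auto

lemma xs_exp:
  fixes x s c :: real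
  assumes x: "x > 0" and s: "s > 0" and c: "c > 0"
  shows "x powr s \<le> (s/c) powr s * exp (c*x)"
proof -
  have "ln (c*x/s) \<le> c*x/s - 1" using x s c by (intro ln_le_minus_one) auto
  hence "s * ln (c*x/s) \<le> s * (c*x/s - 1)" using s by (intro mult_left_mono) auto
  also have "\<dots> \<le> c*x" using s by (simp add: algebra_simps)
  finally have "s * ln (c*x/s) \<le> c*x" .
  moreover have "ln (c*x/s) = ln x - ln (s/c)" using x s c by (simp add: ln_div ln_mult)
  ultimately have "s * ln x \<le> s * ln (s/c) + c*x" by (simp add: algebra_simps)
  hence "exp (s * ln x) \<le> exp (s * ln (s/c) + c*x)" by simp
  thus ?thesis using x s c by (simp add: powr_def exp_add)
qed

lemma weight_an:
  fixes j n \<alpha> \<gamma> p :: real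
  assumes j: "j \<ge> 1" and n: "n \<ge> 1" and \<alpha>: "\<alpha> > 0" and \<gamma>: "\<gamma> > 0"
  shows "n\<^sup>2 * j powr (1+2*\<alpha>) * ln j / (j powr (1+2*\<alpha>+2*p) + n)\<^sup>2 \<le> exp (2*\<gamma>*j) * ((2+2*\<alpha>) * (1 + 1/(2*\<gamma>))) powr (2+2*\<alpha>)"
proof -
  have q0: "n\<^sup>2 \<le> (j powr (1+2*\<alpha>+2*p) + n)\<^sup>2" using n by (intro power_mono) auto
  have q: "n\<^sup>2 / (j powr (1+2*\<alpha>+2*p) + n)\<^sup>2 \<le> 1" using q0 n by (simp add: divide_le_eq_1)
  have lj: "ln j \<le> j" using j ln_le_minus_one[of j] by linarith
  have "j powr (1+2*\<alpha>) * ln j \<le> j powr (1+2*\<alpha>) * j" using lj j by (intro mult_left_mono) auto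
  also have "\<dots> = j powr (2+2*\<alpha>)" using j by (simp add: powr_add power2_eq_square)
  also have "\<dots> \<le> ((2+2*\<alpha>)/(2*\<gamma>)) powr (2+2*\<alpha>) * exp (2*\<gamma>*j)" using j \<alpha> \<gamma> by (intro xs_exp) auto
  also have "\<dots> \<le> ((2+2*\<alpha>) * (1 + 1/(2*\<gamma>))) powr (2+2*\<alpha>) * exp (2*\<gamma>*j)"
    using \<alpha> \<gamma> by (intro mult_right_mono powr_mono2) (auto simp: field_simps)
  finally have X: "j powr (1+2*\<alpha>) * ln j \<le> exp (2*\<gamma>*j) * ((2+2*\<alpha>) * (1 + 1/(2*\<gamma>))) powr (2+2*\<alpha>)"
    by (simp add: mult.commute)
  have X0: "0 \<le> j powr (1+2*\<alpha>) * ln j" using j by simp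
  have "n\<^sup>2 * j powr (1+2*\<alpha>) * ln j / (j powr (1+2*\<alpha>+2*p) + n)\<^sup>2
     = (j powr (1+2*\<alpha>) * ln j) * (n\<^sup>2 / (j powr (1+2*\<alpha>+2*p) + n)\<^sup>2)" by simp
  also have "\<dots> \<le> (j powr (1+2*\<alpha>) * ln j) * 1" using q X0 by (intro mult_left_mono)
  finally show ?thesis using X by simp
qed

lemma weight_sum:
  fixes j n \<alpha> p :: real
  assumes j: "j \<ge> 1" and n: "n \<ge> 1" and \<alpha>: "\<alpha> > 0" and p: "p \<ge> 0"
  shows "n\<^sup>2 * j powr (1+2*\<alpha>) * ln j / (j powr (1+2*\<alpha>+2*p) + n)\<^sup>2 \<le> n\<^sup>2"
proof -
  have lj: "ln j \<le> j" using j ln_le_minus_one[of j] by linarith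
  have "j powr (1+2*\<alpha>) * ln j \<le> j powr (1+2*\<alpha>) * j" using lj j by (intro mult_left_mono) auto
  also have "\<dots> = j powr (2+2*\<alpha>)" using j by (simp add: powr_add power2_eq_square)
  also have "\<dots> \<le> j powr (2*(1+2*\<alpha>+2*p))" using j \<alpha> p by (intro powr_mono) auto
  also have "\<dots> = (j powr (1+2*\<alpha>+2*p))\<^sup>2" by (simp add: power2_eq_square add_ac flip: powr_add)
  also have "\<dots> \<le> (j powr (1+2*\<alpha>+2*p) + n)\<^sup>2" using n by (intro power_mono) auto
  finally have X: "j powr (1+2*\<alpha>) * ln j \<le> (j powr (1+2*\<alpha>+2*p) + n)\<^sup>2" .
  have "0 < j powr (1+2*\<alpha>+2*p) + n" using n by (simp add: add_nonneg_pos)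
  hence D: "0 < (j powr (1+2*\<alpha>+2*p) + n)\<^sup>2" by simp
  have "n\<^sup>2 * j powr (1+2*\<alpha>) * ln j / (j powr (1+2*\<alpha>+2*p) + n)\<^sup>2
      = n\<^sup>2 * ((j powr (1+2*\<alpha>) * ln j) / (j powr (1+2*\<alpha>+2*p) + n)\<^sup>2)" by simp
  also have "\<dots> \<le> n\<^sup>2 * 1" using X D by (intro mult_left_mono) (auto simp: divide_le_eq_1)
  finally show ?thesis by simp
qed



lemma hs_up:
  assumes hk: "\<And>i. i \<ge> 1 \<Longrightarrow> real i powr (-p) / C \<le> \<kappa> i \<and> \<kappa> i \<le> C * real i powr (-p)"
    and C: "C \<ge> 1" and n: "n \<ge> 1"
  shows "hs \<kappa> \<mu> n \<alpha> i \<le> C^4 * ((\<mu> (Suc i))\<^sup>2 * ((real n)\<^sup>2 * real (Suc i) powr (1+2*\<alpha>) * ln (real (Suc i)) / (real (Suc i) powr (1+2*\<alpha>+2*p) + real n)\<^sup>2))"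
proof -
  have k: "real (Suc i) powr (-p) / C \<le> \<kappa> (Suc i) \<and> \<kappa> (Suc i) \<le> C * real (Suc i) powr (-p)"
    using hk[of "Suc i"] by simp
  have "hs \<kappa> \<mu> n \<alpha> i \<le> C^4 * ((real n)\<^sup>2 * real (Suc i) powr (1+2*\<alpha>) * (\<mu> (Suc i))\<^sup>2 * ln (real (Suc i)) / (real (Suc i) powr (1+2*\<alpha>+2*p) + real n)\<^sup>2)"
    unfolding hs_def using k C n by (intro term_upper) auto
  thus ?thesis by (simp add: mult_ac)
qed

lemma hs_low:
  assumes hk: "\<And>i. i \<ge> 1 \<Longrightarrow> real i powr (-p) / C \<le> \<kappa> i \<and> \<kappa> i \<le> C * real i powr (-p)"
    and C: "C \<ge> 1" and n: "n \<ge> 1"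
  shows "(real n)\<^sup>2 * real (Suc i) powr (1+2*\<alpha>) * (\<mu> (Suc i))\<^sup>2 * ln (real (Suc i)) / (C\<^sup>2 * real (Suc i) powr (1+2*\<alpha>+2*p) + real n)\<^sup>2 \<le> hs \<kappa> \<mu> n \<alpha> i"
proof -
  have k: "real (Suc i) powr (-p) / C \<le> \<kappa> (Suc i) \<and> \<kappa> (Suc i) \<le> C * real (Suc i) powr (-p)"
    using hk[of "Suc i"] by simp
  show ?thesis unfolding hs_def using k C n by (intro term_lower) auto
qed

lemma hs_summable:
  assumes hk: "\<And>i. i \<ge> 1 \<Longrightarrow> real i powr (-p) / C \<le> \<kappa> i \<and> \<kappa> i \<le> C * real i powr (-p)"
    and C: "C \<ge> 1" and n: "n \<ge> 1" and p: "p \<ge> 0" and \<alpha>: "\<alpha> > 0" and l2: "in_l2 \<mu>"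
  shows "summable (hs \<kappa> \<mu> n \<alpha>)"
proof (rule summable_comparison_test)
  show "summable (\<lambda>i. C^4 * (real n)\<^sup>2 * (\<mu> (Suc i))\<^sup>2)"
    using l2 unfolding in_l2_def by (intro summable_mult)
  show "\<exists>N. \<forall>i\<ge>N. norm (hs \<kappa> \<mu> n \<alpha> i) \<le> C^4 * (real n)\<^sup>2 * (\<mu> (Suc i))\<^sup>2"
  proof (intro exI allI impI)
    fix i :: nat
    have "hs \<kappa> \<mu> n \<alpha> i \<le> C^4 * ((\<mu> (Suc i))\<^sup>2 * ((real n)\<^sup>2 * real (Suc i) powr (1+2*\<alpha>) * ln (real (Suc i)) / (real (Suc i) powr (1+2*\<alpha>+2*p) + real n)\<^sup>2))"
      by (rule hs_up[OF hk C n]) auto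
    also have "\<dots> \<le> C^4 * ((\<mu> (Suc i))\<^sup>2 * (real n)\<^sup>2)"
      using weight_sum[of "real (Suc i)" "real n" \<alpha> p] n p \<alpha> C
      by (intro mult_left_mono) auto
    finally show "norm (hs \<kappa> \<mu> n \<alpha> i) \<le> C^4 * (real n)\<^sup>2 * (\<mu> (Suc i))\<^sup>2"
      using hs_nonneg[of \<kappa> \<mu> n \<alpha> i] by (simp add: mult_ac)
  qed
qed

lemma suminf_le_R2:
  assumes "summable f" "\<And>i. f i \<ge> 0" "sqrt (suminf f) \<le> R"
  shows "suminf f \<le> R\<^sup>2"
proof -
  have "suminf f \<ge> 0" using assms by (intro suminf_nonneg) auto
  thus ?thesis using assms(3) by (metis real_sqrt_le_iff real_sqrt_unique sqrt_le_D)
qed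

lemma hs_sum_sob:
  assumes hk: "\<And>i. i \<ge> 1 \<Longrightarrow> real i powr (-p) / C \<le> \<kappa> i \<and> \<kappa> i \<le> C * real i powr (-p)"
    and C: "C \<ge> 1" and n: "n \<ge> 1" and p: "p \<ge> 0" and \<alpha>: "\<alpha> > 0" and \<beta>: "\<beta> > 0" and l2: "in_l2 \<mu>"
    and sf: "sobolev_finite \<beta> \<mu>" and sn: "sobolev_norm \<beta> \<mu> \<le> R"
  shows "(\<Sum>i. hs \<kappa> \<mu> n \<alpha> i) \<le> C^4 * (((real n powr (1/(1+2*\<alpha>+2*p))) powr (1+2*\<alpha>-2*\<beta>) + 1) * (ln (real n powr (1/(1+2*\<alpha>+2*p))) + 1)) * R\<^sup>2"
proof -
  define M where "M = ((real n powr (1/(1+2*\<alpha>+2*p))) powr (1+2*\<alpha>-2*\<beta>) + 1) * (ln (real n powr (1/(1+2*\<alpha>+2*p))) + 1)"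
  define w where "w i = real (Suc i) powr (2*\<beta>) * (\<mu> (Suc i))\<^sup>2" for i
  have ws: "summable w" using sf unfolding sobolev_finite_def w_def .
  have w0: "w i \<ge> 0" for i unfolding w_def by simp
  have wR: "suminf w \<le> R\<^sup>2" using suminf_le_R2[OF ws w0] sn unfolding sobolev_norm_def w_def by simp
  have le: "hs \<kappa> \<mu> n \<alpha> i \<le> C^4 * M * w i" for i
  proof -
    have "hs \<kappa> \<mu> n \<alpha> i \<le> C^4 * ((\<mu> (Suc i))\<^sup>2 * ((real n)\<^sup>2 * real (Suc i) powr (1+2*\<alpha>) * ln (real (Suc i)) / (real (Suc i) powr (1+2*\<alpha>+2*p) + real n)\<^sup>2))"
      by (rule hs_up[OF hk C n]) auto
    also have "\<dots> \<le> C^4 * ((\<mu> (Suc i))\<^sup>2 * (real (Suc i) powr (2*\<beta>) * M))"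
      unfolding M_def using weight_sob[of "real (Suc i)" "real n" \<alpha> \<beta> p] n p \<alpha> \<beta> C
      by (intro mult_left_mono) auto
    finally show ?thesis unfolding w_def by (simp add: mult_ac)
  qed
  have "(\<Sum>i. hs \<kappa> \<mu> n \<alpha> i) \<le> (\<Sum>i. C^4 * M * w i)"
    using le hs_summable[OF hk C n p \<alpha> l2] ws by (intro suminf_le) (auto intro: summable_mult)
  also have "\<dots> = C^4 * M * suminf w" using ws by (rule suminf_mult)
  also have "\<dots> \<le> C^4 * M * R\<^sup>2"
  proof -
    have "M \<ge> 0" unfolding M_def using n p \<alpha> by (intro mult_nonneg_nonneg add_nonneg_nonneg) (auto simp: ge_one_powr_ge_zero)
    thus ?thesis using wR C by (intro mult_left_mono) auto
  qed
  finally show ?thesis unfolding M_def .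
qed

lemma hs_sum_an:
  assumes hk: "\<And>i. i \<ge> 1 \<Longrightarrow> real i powr (-p) / C \<le> \<kappa> i \<and> \<kappa> i \<le> C * real i powr (-p)"
    and C: "C \<ge> 1" and n: "n \<ge> 1" and p: "p \<ge> 0" and \<alpha>: "\<alpha> > 0" and \<gamma>: "\<gamma> > 0" and l2: "in_l2 \<mu>"
    and sf: "analytic_finite \<gamma> \<mu>" and sn: "analytic_norm \<gamma> \<mu> \<le> R"
  shows "(\<Sum>i. hs \<kappa> \<mu> n \<alpha> i) \<le> C^4 * ((2+2*\<alpha>) * (1 + 1/(2*\<gamma>))) powr (2+2*\<alpha>) * R\<^sup>2"
proof -
  define M where "M = ((2+2*\<alpha>) * (1 + 1/(2*\<gamma>))) powr (2+2*\<alpha>)"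
  define w where "w i = exp (2*\<gamma>*real (Suc i)) * (\<mu> (Suc i))\<^sup>2" for i
  have ws: "summable w" using sf unfolding analytic_finite_def w_def .
  have w0: "w i \<ge> 0" for i unfolding w_def by simp
  have wR: "suminf w \<le> R\<^sup>2" using suminf_le_R2[OF ws w0] sn unfolding analytic_norm_def w_def by simp
  have le: "hs \<kappa> \<mu> n \<alpha> i \<le> C^4 * M * w i" for i
  proof -
    have "hs \<kappa> \<mu> n \<alpha> i \<le> C^4 * ((\<mu> (Suc i))\<^sup>2 * ((real n)\<^sup>2 * real (Suc i) powr (1+2*\<alpha>) * ln (real (Suc i)) / (real (Suc i) powr (1+2*\<alpha>+2*p) + real n)\<^sup>2))"
      by (rule hs_up[OF hk C n]) auto
    also have "\<dots> \<le> C^4 * ((\<mu> (Suc i))\<^sup>2 * (exp (2*\<gamma>*real (Suc i)) * M))"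
      unfolding M_def using weight_an[of "real (Suc i)" "real n" \<alpha> \<gamma> p] n p \<alpha> \<gamma> C
      by (intro mult_left_mono) auto
    finally show ?thesis unfolding w_def by (simp add: mult_ac)
  qed
  have "(\<Sum>i. hs \<kappa> \<mu> n \<alpha> i) \<le> (\<Sum>i. C^4 * M * w i)"
    using le hs_summable[OF hk C n p \<alpha> l2] ws by (intro suminf_le) (auto intro: summable_mult)
  also have "\<dots> = C^4 * M * suminf w" using ws by (rule suminf_mult)
  also have "\<dots> \<le> C^4 * M * R\<^sup>2"
  proof -
    have "M \<ge> 0" unfolding M_def by simp
    thus ?thesis using wR C by (intro mult_left_mono) auto
  qed
  finally show ?thesis unfolding M_def .
qed



lemma part_i_core:
  assumes hk: "\<And>i. i \<ge> 1 \<Longrightarrow> real i powr (-p) / C \<le> \<kappa> i \<and> \<kappa> i \<le> C * real i powr (-p)"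
    and C: "C \<ge> 1" and n: "n \<ge> 3" and p: "p \<ge> 0" and \<alpha>: "\<alpha> > 0" and \<beta>: "\<beta> > 0" and l2: "in_l2 \<mu>"
    and sf: "sobolev_finite \<beta> \<mu>" and sn: "sobolev_norm \<beta> \<mu> \<le> R"
    and c0: "c0 > 0" and h\<alpha>: "\<alpha> \<le> \<beta> - c0 / ln (real n)"
    and big: "ln (real n) \<ge> 1 + 2*\<beta> + 2*p"
    and e1: "exp (-2*c0/(1 + 2*\<beta> + 2*p)) \<le> E1"
    and e2: "exp (- ln (real n) / (1 + 2*\<beta> + 2*p)) \<le> E2"
  shows "hfun p \<kappa> \<mu> n \<alpha> \<le> C^4 * R\<^sup>2 * 2 * (E1 + E2)"
proof -
  define x where "x = ln (real n)"
  define a where "a = 1 + 2*\<alpha> + 2*p"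
  define am where "am = 1 + 2*\<beta> + 2*p"
  define b where "b = 1 + 2*\<alpha> - 2*\<beta>"
  define N where "N = real n powr (1/a)"
  have n1: "real n \<ge> 3" using n by simp
  have x0: "x > 0" unfolding x_def using n1 by simp
  have a0: "a > 0" unfolding a_def using \<alpha> p by simp
  have ab: "c0 / x > 0" using c0 x0 by simp
  have aam: "a \<le> am" unfolding a_def am_def using h\<alpha> ab x_def by simp
  have NE: "N = exp (x/a)" unfolding N_def x_def using n1 by (simp add: powr_def)
  have lnN: "ln N = x/a" unfolding NE by simp
  have NbE: "N powr b = exp (b*x/a)" unfolding NE by (simp add: powr_def)
  have K0: "C^4 * R\<^sup>2 \<ge> 0" by simp
  have S: "(\<Sum>i. hs \<kappa> \<mu> n \<alpha> i) \<le> C^4 * ((N powr b + 1) * (ln N + 1)) * R\<^sup>2"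
    unfolding N_def a_def b_def using hs_sum_sob[OF hk C _ p \<alpha> \<beta> l2 sf sn] n by simp
  have pre0: "a / (N * x) \<ge> 0" using a0 x0 NE by simp
  have "hfun p \<kappa> \<mu> n \<alpha> = a / (N * x) * (\<Sum>i. hs \<kappa> \<mu> n \<alpha> i)"
    unfolding hfun_alt a_def N_def x_def ..
  also have "\<dots> \<le> a / (N * x) * (C^4 * ((N powr b + 1) * (ln N + 1)) * R\<^sup>2)"
    using S pre0 by (intro mult_left_mono)
  also have "\<dots> = C^4 * R\<^sup>2 * ((x + a) / x) * (exp ((b-1)*x/a) + exp (-x/a))"
  proof -
    have N0: "N > 0" unfolding NE by simp
    have L: "a / (N * x) * (C^4 * ((N powr b + 1) * (ln N + 1)) * R\<^sup>2) = C^4 * R\<^sup>2 * ((a * (ln N + 1)) / x) * ((N powr b + 1) / N)"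
      using N0 x0 by (simp add: field_simps)
    have q1: "N powr b / N = exp ((b-1)*x/a)"
    proof -
      have "N powr b / N = exp (b*x/a) / exp (x/a)" by (subst NbE, subst NE, rule refl)
      also have "\<dots> = exp (b*x/a - x/a)" by (rule exp_diff[symmetric])
      also have "b*x/a - x/a = (b-1)*x/a" by (simp add: diff_divide_distrib left_diff_distrib)
      finally show ?thesis .
    qed
    have q2: "1 / N = exp (-x/a)" unfolding NE by (simp add: exp_minus inverse_eq_divide)
    have Q: "(N powr b + 1) / N = exp ((b-1)*x/a) + exp (-x/a)"
      using q1 q2 by (simp add: add_divide_distrib)
    have A: "a * (ln N + 1) = x + a" unfolding lnN using a0 by (simp add: distrib_left)
    show ?thesis unfolding L Q A ..
  qed
  also have "\<dots> \<le> C^4 * R\<^sup>2 * 2 * (E1 + E2)"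
  proof -
    have "x + a \<le> 2 * x" using aam big unfolding x_def am_def by simp
    hence q: "(x + a) / x \<le> 2" using x0 by (simp add: divide_le_eq)
    have "c0 / x \<le> \<beta> - \<alpha>" using h\<alpha> unfolding x_def by simp
    hence "c0 \<le> (\<beta> - \<alpha>) * x" using x0 by (simp add: pos_divide_le_eq)
    hence "(2*\<alpha> - 2*\<beta>) * x \<le> -2*c0" by (simp add: algebra_simps)
    hence "(2*\<alpha> - 2*\<beta>) * x / a \<le> (-2*c0)/a" using a0 by (intro divide_right_mono) auto
    hence "(b-1)*x/a \<le> -2*c0/a" unfolding b_def by simp
    also have "-2*c0/a \<le> -2*c0/am" using a0 aam c0 by (simp add: frac_le)
    finally have "exp ((b-1)*x/a) \<le> exp (-2*c0/am)" by simp
    hence "exp ((b-1)*x/a) \<le> E1" using e1 unfolding am_def by linarith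
    moreover have "exp (-x/a) \<le> E2"
    proof -
      have "-x/a \<le> -x/am" using a0 aam x0 by (simp add: frac_le)
      hence ee: "exp (-x/a) \<le> exp (-x/am)" by simp
      have "exp (-x/am) \<le> E2" using e2 unfolding am_def x_def by simp
      with ee show ?thesis by (rule order_trans)
    qed
    ultimately have "exp ((b-1)*x/a) + exp (-x/a) \<le> E1 + E2" by simp
    moreover have "(x + a) / x \<ge> 0" using x0 a0 by simp
    ultimately have "((x + a) / x) * (exp ((b-1)*x/a) + exp (-x/a)) \<le> 2 * (E1 + E2)"
      using q by (intro mult_mono) auto
    from mult_left_mono[OF this K0] show ?thesis by (simp only: mult.assoc)
  qed
  finally show ?thesis .
qed



lemma part_i:
  assumes hk: "\<And>i. i \<ge> 1 \<Longrightarrow> real i powr (-p) / C \<le> \<kappa> i \<and> \<kappa> i \<le> C * real i powr (-p)"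
    and C: "C \<ge> 1" and p: "p \<ge> 0" and l: "l > 0"
  shows "\<forall>\<beta> R. \<beta> > 0 \<longrightarrow> R > 0 \<longrightarrow>
        (\<exists>c0 > 0. \<forall>\<^sub>F n in sequentially.
           \<forall>\<mu>. in_l2 \<mu> \<and> sobolev_finite \<beta> \<mu> \<and> sobolev_norm \<beta> \<mu> \<le> R \<longrightarrow>
             alpha_lower p \<kappa> l \<mu> n \<ge> ereal (\<beta> - c0 / ln (real n)))"
proof (intro allI impI)
  fix \<beta> R :: real
  assume \<beta>: "\<beta> > 0" and R: "R > 0"
  define K where "K = C^4 * R\<^sup>2"
  define am where "am = 1 + 2*\<beta> + 2*p"
  define c0 where "c0 = am / 2 * ln (6*K/l + 1)"
  have K0: "K > 0" unfolding K_def using C R by simp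
  have am0: "am > 0" unfolding am_def using \<beta> p by simp
  have "6*K/l > 0" using K0 l by simp
  hence "ln (6*K/l + 1) > 0" by (intro ln_gt_zero) linarith
  hence c00: "c0 > 0" unfolding c0_def using am0 by simp
  have e1: "exp (-2*c0/am) \<le> l/(6*K)"
  proof -
    have y0: "6*K/l + 1 > 0" using \<open>6*K/l > 0\<close> by linarith
    have "-2*c0/am = - ln (6*K/l + 1)" unfolding c0_def using am0 by simp
    hence "exp (-2*c0/am) = exp (- ln (6*K/l + 1))" by simp
    also have "\<dots> = 1 / (6*K/l + 1)" using y0 by (simp add: exp_minus inverse_eq_divide)
    also have "\<dots> \<le> l/(6*K)" using K0 l by (simp add: field_simps)
    finally show ?thesis .
  qed
  have ev1: "\<forall>\<^sub>F n in sequentially. real n \<ge> 3" using eventually_ge_at_top[of "3::nat"]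
    by eventually_elim simp
  have ev2: "\<forall>\<^sub>F n in sequentially. ln (real n) \<ge> am" using am0 by real_asymp
  have ev3: "\<forall>\<^sub>F n in sequentially. 2*K*exp (- ln (real n) / am) < 2*l/3" using am0 K0 l by real_asymp
  have ev4: "\<forall>\<^sub>F n in sequentially. sqrt (ln (real n)) \<ge> \<beta>" by real_asymp
  have ev: "\<forall>\<^sub>F n in sequentially. real n \<ge> 3 \<and> ln (real n) \<ge> am \<and> 2*K*exp (- ln (real n) / am) < 2*l/3 \<and> sqrt (ln (real n)) \<ge> \<beta>"
    using ev1 ev2 ev3 ev4 by eventually_elim auto
  show "\<exists>c0 > 0. \<forall>\<^sub>F n in sequentially.
           \<forall>\<mu>. in_l2 \<mu> \<and> sobolev_finite \<beta> \<mu> \<and> sobolev_norm \<beta> \<mu> \<le> R \<longrightarrow>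
             alpha_lower p \<kappa> l \<mu> n \<ge> ereal (\<beta> - c0 / ln (real n))"
  proof (intro exI conjI)
    show "c0 > 0" by (rule c00)
    show "\<forall>\<^sub>F n in sequentially.
           \<forall>\<mu>. in_l2 \<mu> \<and> sobolev_finite \<beta> \<mu> \<and> sobolev_norm \<beta> \<mu> \<le> R \<longrightarrow>
             alpha_lower p \<kappa> l \<mu> n \<ge> ereal (\<beta> - c0 / ln (real n))"
      using ev
    proof eventually_elim
      case (elim n)
      have n3: "n \<ge> 3" using elim by linarith
      have lnpos: "ln (real n) > 0" using elim by simp
      show ?case
      proof (intro allI impI)
        fix \<mu> assume H: "in_l2 \<mu> \<and> sobolev_finite \<beta> \<mu> \<and> sobolev_norm \<beta> \<mu> \<le> R"
        have inf: "ereal (\<beta> - c0 / ln (real n)) \<le> Inf {ereal \<alpha> | \<alpha>. \<alpha> > 0 \<and> hfun p \<kappa> \<mu> n \<alpha> > l}"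
        proof (rule Inf_greatest)
          fix z assume "z \<in> {ereal \<alpha> | \<alpha>. \<alpha> > 0 \<and> hfun p \<kappa> \<mu> n \<alpha> > l}"
          then obtain \<alpha> where z: "z = ereal \<alpha>" and \<alpha>: "\<alpha> > 0" and hl: "hfun p \<kappa> \<mu> n \<alpha> > l" by blast
          have "\<alpha> > \<beta> - c0 / ln (real n)"
          proof (rule ccontr)
            assume "\<not> ?thesis"
            hence h\<alpha>: "\<alpha> \<le> \<beta> - c0 / ln (real n)" by simp
            have "hfun p \<kappa> \<mu> n \<alpha> \<le> C^4 * R\<^sup>2 * 2 * (l/(6*K) + exp (- ln (real n) / (1 + 2*\<beta> + 2*p)))"
            proof -
              have b1: "ln (real n) \<ge> 1 + 2*\<beta> + 2*p" using elim unfolding am_def by blast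
              have e1': "exp (-2*c0/(1 + 2*\<beta> + 2*p)) \<le> l/(6*K)" using e1 unfolding am_def .
              have H1: "in_l2 \<mu>" and H2: "sobolev_finite \<beta> \<mu>" and H3: "sobolev_norm \<beta> \<mu> \<le> R" using H by auto
              show ?thesis by (rule part_i_core[OF hk C n3 p \<alpha> \<beta> H1 H2 H3 c00 h\<alpha> b1 e1' order_refl])
            qed
            also have "\<dots> = l/3 + 2*K*exp (- ln (real n) / am)"
            proof -
              define E where "E = exp (- ln (real n) / am)"
              have "C^4 * R\<^sup>2 * 2 * (l/(6*K) + E) = K * 2 * (l/(6*K) + E)" unfolding K_def ..
              also have "\<dots> = l/3 + 2*K*E" using K0 by (simp add: field_simps)
              finally show ?thesis unfolding E_def am_def .
            qed
            also have "\<dots> < l" using elim by simp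
            finally show False using hl by simp
          qed
          thus "ereal (\<beta> - c0 / ln (real n)) \<le> z" unfolding z by simp
        qed
        have "ereal (\<beta> - c0 / ln (real n)) \<le> ereal (sqrt (ln (real n)))"
        proof -
          have "c0 / ln (real n) > 0" using c00 lnpos by simp
          moreover have "\<beta> \<le> sqrt (ln (real n))" using elim by blast
          ultimately show ?thesis by simp
        qed
        thus "alpha_lower p \<kappa> l \<mu> n \<ge> ereal (\<beta> - c0 / ln (real n))"
          unfolding alpha_lower_def by (rule min.boundedI[OF inf])
      qed
    qed
  qed
qed



lemma part_ii_core:
  assumes hk: "\<And>i. i \<ge> 1 \<Longrightarrow> real i powr (-p) / C \<le> \<kappa> i \<and> \<kappa> i \<le> C * real i powr (-p)"
    and C: "C \<ge> 1" and n: "n \<ge> 3" and p: "p \<ge> 0" and \<alpha>: "\<alpha> > 0" and \<gamma>: "\<gamma> > 0" and l2: "in_l2 \<mu>"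
    and sf: "analytic_finite \<gamma> \<mu>" and sn: "analytic_norm \<gamma> \<mu> \<le> R" and R: "R > 0"
    and h\<alpha>: "\<alpha> \<le> A"
  shows "hfun p \<kappa> \<mu> n \<alpha> \<le> (1 + 2*A + 2*p) / (real n powr (1/(1 + 2*A + 2*p)) * ln (real n)) * (C^4 * ((2+2*A) * (1 + 1/(2*\<gamma>))) powr (2+2*A) * R\<^sup>2)"
proof -
  define x where "x = ln (real n)"
  define a where "a = 1 + 2*\<alpha> + 2*p"
  define aA where "aA = 1 + 2*A + 2*p"
  define N where "N = real n powr (1/a)"
  define NA where "NA = real n powr (1/aA)"
  define K where "K = 1 + 1/(2*\<gamma>)"
  have n1: "real n \<ge> 3" using n by simp
  have x0: "x > 0" unfolding x_def using n1 by simp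
  have a0: "a > 0" unfolding a_def using \<alpha> p by simp
  have aaA: "a \<le> aA" unfolding a_def aA_def using h\<alpha> by simp
  have K1: "K \<ge> 1" unfolding K_def using \<gamma> by simp
  have NA0: "NA > 0" unfolding NA_def using n1 by simp
  have NAN: "NA \<le> N" unfolding NA_def N_def using n1 a0 aaA by (intro powr_mono) (auto simp: frac_le)
  have S: "(\<Sum>i. hs \<kappa> \<mu> n \<alpha> i) \<le> C^4 * ((2+2*\<alpha>) * K) powr (2+2*\<alpha>) * R\<^sup>2"
    unfolding K_def using hs_sum_an[OF hk C _ p \<alpha> \<gamma> l2 sf sn] n by simp
  have W: "((2+2*\<alpha>) * K) powr (2+2*\<alpha>) \<le> ((2+2*A) * K) powr (2+2*A)"
  proof -
    have "((2+2*\<alpha>) * K) powr (2+2*\<alpha>) \<le> ((2+2*A) * K) powr (2+2*\<alpha>)"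
      using h\<alpha> \<alpha> K1 by (intro powr_mono2 mult_right_mono) auto
    also have "\<dots> \<le> ((2+2*A) * K) powr (2+2*A)"
    proof (rule powr_mono)
      show "2+2*\<alpha> \<le> 2+2*A" using h\<alpha> by simp
      have "1 * 1 \<le> (2+2*A) * K" using h\<alpha> \<alpha> K1 by (intro mult_mono) auto
      thus "1 \<le> (2+2*A) * K" by simp
    qed
    finally show ?thesis .
  qed
  have S2: "(\<Sum>i. hs \<kappa> \<mu> n \<alpha> i) \<le> C^4 * ((2+2*A) * K) powr (2+2*A) * R\<^sup>2"
  proof -
    have "C^4 * ((2+2*\<alpha>) * K) powr (2+2*\<alpha>) * R\<^sup>2 \<le> C^4 * ((2+2*A) * K) powr (2+2*A) * R\<^sup>2"
      using W C by (intro mult_right_mono mult_left_mono) auto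
    thus ?thesis using S by linarith
  qed
  have pre: "a / (N * x) \<le> aA / (NA * x)"
    using aaA a0 NA0 NAN x0 by (intro frac_le) (auto intro: mult_right_mono)
  have pre0: "0 \<le> a / (N * x)" using a0 x0 NA0 NAN by simp
  have S0: "0 \<le> (\<Sum>i. hs \<kappa> \<mu> n \<alpha> i)" using hs_summable[OF hk C _ p \<alpha> l2] n hs_nonneg
    by (intro suminf_nonneg) auto
  have "hfun p \<kappa> \<mu> n \<alpha> = a / (N * x) * (\<Sum>i. hs \<kappa> \<mu> n \<alpha> i)"
    unfolding hfun_alt a_def N_def x_def ..
  also have "\<dots> \<le> aA / (NA * x) * (C^4 * ((2+2*A) * K) powr (2+2*A) * R\<^sup>2)"
    using pre S2 pre0 S0 by (intro mult_mono) auto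
  finally show ?thesis unfolding aA_def NA_def x_def K_def .
qed

lemma part_ii:
  assumes hk: "\<And>i. i \<ge> 1 \<Longrightarrow> real i powr (-p) / C \<le> \<kappa> i \<and> \<kappa> i \<le> C * real i powr (-p)"
    and C: "C \<ge> 1" and p: "p \<ge> 0" and l: "l > 0"
  shows "\<forall>\<gamma> R. \<gamma> > 0 \<longrightarrow> R > 0 \<longrightarrow>
        (\<forall>\<^sub>F n in sequentially.
           \<forall>\<mu>. in_l2 \<mu> \<and> analytic_finite \<gamma> \<mu> \<and> analytic_norm \<gamma> \<mu> \<le> R \<longrightarrow>
             alpha_lower p \<kappa> l \<mu> n \<ge> ereal (sqrt (ln (real n)) / ln (ln (real n))))"
proof (intro allI impI)
  fix \<gamma> R :: real
  assume \<gamma>: "\<gamma> > 0" and R: "R > 0"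
  define K where "K = 1 + 1/(2*\<gamma>)"
  have K1: "K \<ge> 1" unfolding K_def using \<gamma> by simp
  have ev1: "\<forall>\<^sub>F n in sequentially. real n \<ge> 3" using eventually_ge_at_top[of "3::nat"]
    by eventually_elim simp
  have ev2: "\<forall>\<^sub>F n in sequentially. ln (ln (real n)) \<ge> 1" by real_asymp
  have ev3: "\<forall>\<^sub>F n::nat in sequentially.
     (1 + 2*(sqrt (ln (real n)) / ln (ln (real n))) + 2*p) / (real n powr (1/(1 + 2*(sqrt (ln (real n)) / ln (ln (real n))) + 2*p)) * ln (real n))
     * (C^4 * ((2+2*(sqrt (ln (real n)) / ln (ln (real n)))) * K) powr (2+2*(sqrt (ln (real n)) / ln (ln (real n)))) * R\<^sup>2) < l"
    using p K1 C R l by real_asymp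
  show "\<forall>\<^sub>F n in sequentially.
           \<forall>\<mu>. in_l2 \<mu> \<and> analytic_finite \<gamma> \<mu> \<and> analytic_norm \<gamma> \<mu> \<le> R \<longrightarrow>
             alpha_lower p \<kappa> l \<mu> n \<ge> ereal (sqrt (ln (real n)) / ln (ln (real n)))"
    using ev1 ev2 ev3
  proof eventually_elim
    case (elim n)
    define A where "A = sqrt (ln (real n)) / ln (ln (real n))"
    have n3: "n \<ge> 3" using elim by linarith
    show ?case
    proof (intro allI impI)
      fix \<mu> assume H: "in_l2 \<mu> \<and> analytic_finite \<gamma> \<mu> \<and> analytic_norm \<gamma> \<mu> \<le> R"
      have H1: "in_l2 \<mu>" and H2: "analytic_finite \<gamma> \<mu>" and H3: "analytic_norm \<gamma> \<mu> \<le> R" using H by auto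
      have inf: "ereal A \<le> Inf {ereal \<alpha> | \<alpha>. \<alpha> > 0 \<and> hfun p \<kappa> \<mu> n \<alpha> > l}"
      proof (rule Inf_greatest)
        fix z assume "z \<in> {ereal \<alpha> | \<alpha>. \<alpha> > 0 \<and> hfun p \<kappa> \<mu> n \<alpha> > l}"
        then obtain \<alpha> where z: "z = ereal \<alpha>" and \<alpha>: "\<alpha> > 0" and hl: "hfun p \<kappa> \<mu> n \<alpha> > l" by blast
        have "\<alpha> > A"
        proof (rule ccontr)
          assume "\<not> ?thesis"
          hence h\<alpha>: "\<alpha> \<le> A" by simp
          have "hfun p \<kappa> \<mu> n \<alpha> \<le> (1 + 2*A + 2*p) / (real n powr (1/(1 + 2*A + 2*p)) * ln (real n)) * (C^4 * ((2+2*A) * (1 + 1/(2*\<gamma>))) powr (2+2*A) * R\<^sup>2)"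
            by (rule part_ii_core[OF hk C n3 p \<alpha> \<gamma> H1 H2 H3 R h\<alpha>])
          also have "\<dots> < l" using elim(3) unfolding A_def K_def .
          finally show False using hl by simp
        qed
        thus "ereal A \<le> z" unfolding z by simp
      qed
      have "A \<le> sqrt (ln (real n))"
      proof -
        have "sqrt (ln (real n)) \<ge> 0" using elim by simp
        moreover have "ln (ln (real n)) \<ge> 1" using elim by blast
        ultimately show ?thesis unfolding A_def by (simp add: divide_le_eq mult_le_cancel_left1 mult_le_cancel_left)
      qed
      hence "ereal A \<le> ereal (sqrt (ln (real n)))" by simp
      thus "alpha_lower p \<kappa> l \<mu> n \<ge> ereal (sqrt (ln (real n)) / ln (ln (real n)))"
        unfolding alpha_lower_def A_def[symmetric] by (rule min.boundedI[OF inf])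
    qed
  qed
qed



lemma hfun_ge_term:
  assumes hk: "\<And>i. i \<ge> 1 \<Longrightarrow> real i powr (-p) / C \<le> \<kappa> i \<and> \<kappa> i \<le> C * real i powr (-p)"
    and C: "C \<ge> 1" and n: "n \<ge> 3" and p: "p \<ge> 0" and \<alpha>: "\<alpha> > 0" and l2: "in_l2 \<mu>"
    and I: "finite I"
  shows "hfun p \<kappa> \<mu> n \<alpha> \<ge> (1 + 2*\<alpha> + 2*p) / (real n powr (1 / (1 + 2*\<alpha> + 2*p)) * ln (real n)) * (\<Sum>i\<in>I. hs \<kappa> \<mu> n \<alpha> i)"
proof -
  have "(\<Sum>i\<in>I. hs \<kappa> \<mu> n \<alpha> i) \<le> (\<Sum>i. hs \<kappa> \<mu> n \<alpha> i)"
    using hs_summable[OF hk C _ p \<alpha> l2] n I hs_nonneg by (intro sum_le_suminf) auto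
  moreover have "0 \<le> (1 + 2*\<alpha> + 2*p) / (real n powr (1 / (1 + 2*\<alpha> + 2*p)) * ln (real n))"
    using \<alpha> p n by simp
  ultimately show ?thesis unfolding hfun_alt by (intro mult_left_mono)
qed

lemma part_iv:
  assumes hk: "\<And>i. i \<ge> 1 \<Longrightarrow> real i powr (-p) / C \<le> \<kappa> i \<and> \<kappa> i \<le> C * real i powr (-p)"
    and C: "C \<ge> 1" and p: "p \<ge> 0" and L: "L > 0" and l2: "in_l2 \<mu>0"
  shows "(\<exists>i \<ge> 2. \<mu>0 i \<noteq> 0) \<longrightarrow>
        (\<forall>\<^sub>F n in sequentially.
           alpha_upper p \<kappa> L \<mu>0 n \<le> ereal (ln (real n) / (2 * ln 2) - 1/2 - p))"
proof
  assume "\<exists>i \<ge> 2. \<mu>0 i \<noteq> 0"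
  then obtain i0 where i0: "i0 \<ge> 2" and m0: "\<mu>0 i0 \<noteq> 0" by blast
  define k where "k = i0 - 1"
  have ik: "i0 = Suc k" unfolding k_def using i0 by simp
  define j where "j = real i0"
  define lj where "lj = ln j"
  define m where "m = \<mu>0 i0"
  define D where "D = m\<^sup>2 / (j * j powr (2*p) * (C\<^sup>2 + 1)\<^sup>2)"
  have j2: "j \<ge> 2" unfolding j_def using i0 by simp
  have lj0: "lj > 0" unfolding lj_def using j2 by simp
  have lj2: "lj \<ge> ln 2" unfolding lj_def using j2 by simp
  have C1: "C\<^sup>2 + 1 > 0" using zero_le_power2[of C] by linarith
  have D0: "D > 0" unfolding D_def using m0 j2 C1 unfolding m_def by (intro divide_pos_pos mult_pos_pos) auto
  have ev1: "\<forall>\<^sub>F n in sequentially. real n \<ge> 3" using eventually_ge_at_top[of "3::nat"]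
    by eventually_elim simp
  have ev2: "\<forall>\<^sub>F n in sequentially. ln (real n) / lj > 1 + 2*p" using lj0 p by real_asymp
  have ev3: "\<forall>\<^sub>F n in sequentially. real n * D > L * (ln (real n))\<^sup>2" using D0 L by real_asymp
  show "\<forall>\<^sub>F n in sequentially.
           alpha_upper p \<kappa> L \<mu>0 n \<le> ereal (ln (real n) / (2 * ln 2) - 1/2 - p)"
    using ev1 ev2 ev3
  proof eventually_elim
    case (elim n)
    have n3: "n \<ge> 3" using elim by linarith
    define x where "x = ln (real n)"
    define a where "a = x / lj"
    define \<alpha> where "\<alpha> = (a - 1 - 2*p) / 2"
    have x0: "x > 0" unfolding x_def using elim by simp
    have a0: "a > 0" unfolding a_def using x0 lj0 by simp
    have \<alpha>0: "\<alpha> > 0" unfolding \<alpha>_def a_def x_def using elim by simp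
    have aeq: "1 + 2*\<alpha> + 2*p = a" unfolding \<alpha>_def by (simp add: field_simps)
    have nexp: "real n = exp x" unfolding x_def using elim by simp
    have jexp: "j = exp lj" unfolding lj_def using j2 by simp
    have N: "real n powr (1/a) = j"
    proof -
      have "real n powr (1/a) = exp (x * (1/a))" unfolding nexp by (simp add: powr_def)
      also have "x * (1/a) = lj" unfolding a_def using x0 lj0 by simp
      finally show ?thesis using jexp by simp
    qed
    have ja: "j powr a = real n"
    proof -
      have "j powr a = exp (a * lj)" using jexp by (simp add: powr_def)
      also have "a * lj = x" unfolding a_def using lj0 by simp
      finally show ?thesis using nexp by simp
    qed
    have j1: "j powr (1 + 2*\<alpha>) = real n / j powr (2*p)"
    proof -
      have "1 + 2*\<alpha> = a - 2*p" using aeq by linarith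
      hence "j powr (1 + 2*\<alpha>) = j powr (a - 2*p)" by simp
      also have "\<dots> = j powr a / j powr (2*p)" by (rule powr_diff)
      finally show ?thesis using ja by simp
    qed
    have T: "hs \<kappa> \<mu>0 n \<alpha> k \<ge> real n * m\<^sup>2 * lj / (j powr (2*p) * (C\<^sup>2 + 1)\<^sup>2)"
    proof -
      have "hs \<kappa> \<mu>0 n \<alpha> k \<ge> (real n)\<^sup>2 * real (Suc k) powr (1+2*\<alpha>) * (\<mu>0 (Suc k))\<^sup>2 * ln (real (Suc k)) / (C\<^sup>2 * real (Suc k) powr (1+2*\<alpha>+2*p) + real n)\<^sup>2"
        using n3 by (intro hs_low[OF hk C]) auto
      also have "(real n)\<^sup>2 * real (Suc k) powr (1+2*\<alpha>) * (\<mu>0 (Suc k))\<^sup>2 * ln (real (Suc k)) / (C\<^sup>2 * real (Suc k) powr (1+2*\<alpha>+2*p) + real n)\<^sup>2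
          = (real n)\<^sup>2 * (real n / j powr (2*p)) * m\<^sup>2 * lj / (C\<^sup>2 * real n + real n)\<^sup>2"
        unfolding ik[symmetric] j_def[symmetric] m_def[symmetric] lj_def[symmetric] j1 aeq ja ..
      also have "\<dots> = real n * m\<^sup>2 * lj / (j powr (2*p) * (C\<^sup>2 + 1)\<^sup>2)"
      proof -
        define J where "J = j powr (2*p)"
        define r where "r = real n"
        have "J > 0" unfolding J_def using j2 by simp
        moreover have "r > 0" unfolding r_def using n3 by simp
        moreover have aux: "\<And>Q r J. Q > 0 \<Longrightarrow> r > 0 \<Longrightarrow> J > 0 \<Longrightarrow> r\<^sup>2 * (r / J) * m\<^sup>2 * lj / (Q * r)\<^sup>2 = r * m\<^sup>2 * lj / (J * Q\<^sup>2)"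
          by (simp add: field_simps power2_eq_square)
        moreover have "C\<^sup>2 * r + r = (C\<^sup>2 + 1) * r" by (simp add: algebra_simps)
        ultimately have "r\<^sup>2 * (r / J) * m\<^sup>2 * lj / (C\<^sup>2 * r + r)\<^sup>2 = r * m\<^sup>2 * lj / (J * (C\<^sup>2 + 1)\<^sup>2)"
          using C1 by simp
        thus ?thesis unfolding J_def r_def .
      qed
      finally show ?thesis .
    qed
    have "hfun p \<kappa> \<mu>0 n \<alpha> \<ge> a / (j * x) * (\<Sum>i\<in>{k}. hs \<kappa> \<mu>0 n \<alpha> i)"
      using hfun_ge_term[OF hk C n3 p \<alpha>0 l2, of "{k}"] unfolding aeq N x_def by simp
    also have "a / (j * x) * (\<Sum>i\<in>{k}. hs \<kappa> \<mu>0 n \<alpha> i) \<ge> a / (j * x) * (real n * m\<^sup>2 * lj / (j powr (2*p) * (C\<^sup>2 + 1)\<^sup>2))"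
      using T a0 x0 j2 by (intro mult_left_mono) auto
    also have "a / (j * x) * (real n * m\<^sup>2 * lj / (j powr (2*p) * (C\<^sup>2 + 1)\<^sup>2)) = real n * D"
    proof -
      define J where "J = j powr (2*p)"
      have "J > 0" unfolding J_def using j2 by simp
      thus ?thesis unfolding D_def a_def J_def[symmetric] using x0 lj0 j2
        by (simp add: field_simps)
    qed
    finally have hb: "hfun p \<kappa> \<mu>0 n \<alpha> > L * (ln (real n))\<^sup>2" using elim by simp
    have "alpha_upper p \<kappa> L \<mu>0 n \<le> ereal \<alpha>"
      unfolding alpha_upper_def using \<alpha>0 hb by (intro Inf_lower) auto
    also have "ereal \<alpha> \<le> ereal (ln (real n) / (2 * ln 2) - 1/2 - p)"
    proof -
      have "x / lj \<le> x / ln 2" using lj2 x0 lj0 by (intro divide_left_mono) auto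
      hence "\<alpha> \<le> x / (2 * ln 2) - 1/2 - p" unfolding \<alpha>_def a_def by simp
      thus ?thesis unfolding x_def by simp
    qed
    finally show ?case .
  qed
qed



lemma term_iii:
  fixes j N n a a1 \<alpha> \<gamma> c m C p :: real
  assumes jN: "N \<le> j" and N1: "N \<ge> 1" and j4: "j \<le> 4*N" and Na: "N powr (1+2*\<alpha>+2*p) = n"
    and aa1: "1+2*\<alpha>+2*p \<le> a1" and \<alpha>0: "\<alpha> > 0" and p: "p \<ge> 0" and \<alpha>\<gamma>: "\<gamma> \<le> \<alpha>" and c: "c > 0"
    and m: "c * j powr (-\<gamma>-1/2) \<le> m" and C: "C \<ge> 1"
  shows "c\<^sup>2 * N powr (2*\<alpha>-2*\<gamma>) * ln N / (C\<^sup>2 * 4 powr a1 + 1)\<^sup>2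
     \<le> n\<^sup>2 * j powr (1+2*\<alpha>) * m\<^sup>2 * ln j / (C\<^sup>2 * j powr (1+2*\<alpha>+2*p) + n)\<^sup>2"
proof -
  define a where "a = 1+2*\<alpha>+2*p"
  define Q where "Q = C\<^sup>2 * 4 powr a1 + 1"
  have a0: "a > 0" unfolding a_def using \<alpha>0 p by simp
  have j1: "j \<ge> 1" using jN N1 by simp
  have n0: "n > 0" using Na N1 by (auto simp: powr_gt_zero)
  have Q1: "Q \<ge> 1" unfolding Q_def by simp
  have ja: "j powr a \<le> 4 powr a1 * n"
  proof -
    have "j powr a \<le> (4*N) powr a" using j4 j1 a0 by (intro powr_mono2) auto
    also have "\<dots> = 4 powr a * n" using N1 Na unfolding a_def by (simp add: powr_mult)
    also have "\<dots> \<le> 4 powr a1 * n" using aa1 n0 unfolding a_def by (intro mult_right_mono powr_mono) auto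
    finally show ?thesis .
  qed
  have den: "C\<^sup>2 * j powr a + n \<le> Q * n"
  proof -
    have "C\<^sup>2 * j powr a \<le> C\<^sup>2 * (4 powr a1 * n)" using ja by (intro mult_left_mono) auto
    thus ?thesis unfolding Q_def by (simp add: algebra_simps)
  qed
  have den0: "0 < C\<^sup>2 * j powr a + n" using n0 by (simp add: add_nonneg_pos)
  have den2: "(C\<^sup>2 * j powr a + n)\<^sup>2 \<le> (Q * n)\<^sup>2" using den den0 by (intro power_mono) auto
  have cm0: "0 \<le> c * j powr (-\<gamma>-1/2)" using c by simp
  have m2: "(c * j powr (-\<gamma>-1/2))\<^sup>2 \<le> m\<^sup>2" using m cm0 by (intro power_mono) auto
  have sq: "(c * j powr (-\<gamma>-1/2))\<^sup>2 = c\<^sup>2 * j powr (-2*\<gamma>-1)"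
  proof -
    have "(j powr (-\<gamma>-1/2))\<^sup>2 = j powr (-\<gamma>-1/2) * j powr (-\<gamma>-1/2)" by (simp add: power2_eq_square)
    also have "\<dots> = j powr (-2*\<gamma>-1)" by (simp flip: powr_add)
    finally show ?thesis by (simp add: power_mult_distrib)
  qed
  have jj: "j powr (1+2*\<alpha>) * j powr (-2*\<gamma>-1) = j powr (2*\<alpha>-2*\<gamma>)" by (simp flip: powr_add)
  have A1: "c\<^sup>2 * N powr (2*\<alpha>-2*\<gamma>) \<le> j powr (1+2*\<alpha>) * m\<^sup>2"
  proof -
    have "c\<^sup>2 * N powr (2*\<alpha>-2*\<gamma>) \<le> c\<^sup>2 * j powr (2*\<alpha>-2*\<gamma>)"
      using jN N1 \<alpha>\<gamma> by (intro mult_left_mono powr_mono2) auto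
    also have "\<dots> = j powr (1+2*\<alpha>) * (c * j powr (-\<gamma>-1/2))\<^sup>2" unfolding sq jj[symmetric] by simp
    also have "\<dots> \<le> j powr (1+2*\<alpha>) * m\<^sup>2" using m2 by (intro mult_left_mono) auto
    finally show ?thesis .
  qed
  have A2: "ln N \<le> ln j" using jN N1 by simp
  have lnN0: "ln N \<ge> 0" using N1 by simp
  have A3: "c\<^sup>2 * N powr (2*\<alpha>-2*\<gamma>) * ln N \<le> j powr (1+2*\<alpha>) * m\<^sup>2 * ln j"
    by (rule mult_mono[OF A1 A2]) (use lnN0 in auto)
  have "c\<^sup>2 * N powr (2*\<alpha>-2*\<gamma>) * ln N / Q\<^sup>2 = n\<^sup>2 * (c\<^sup>2 * N powr (2*\<alpha>-2*\<gamma>) * ln N) / (Q * n)\<^sup>2"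
    using n0 Q1 by (simp add: power_mult_distrib)
  also have "\<dots> \<le> n\<^sup>2 * (j powr (1+2*\<alpha>) * m\<^sup>2 * ln j) / (Q * n)\<^sup>2"
    using A3 by (intro divide_right_mono mult_left_mono) auto
  also have "\<dots> \<le> n\<^sup>2 * (j powr (1+2*\<alpha>) * m\<^sup>2 * ln j) / (C\<^sup>2 * j powr a + n)\<^sup>2"
  proof (rule divide_left_mono)
    show "0 \<le> n\<^sup>2 * (j powr (1+2*\<alpha>) * m\<^sup>2 * ln j)" using j1 by simp
    show "(C\<^sup>2 * j powr a + n)\<^sup>2 \<le> (Q * n)\<^sup>2" by (rule den2)
    show "0 < (Q * n)\<^sup>2 * (C\<^sup>2 * j powr a + n)\<^sup>2" using den0 Q1 n0 by simp
  qed
  finally show ?thesis unfolding Q_def a_def by (simp add: mult.assoc)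
qed



lemma part_iii:
  assumes hk: "\<And>i. i \<ge> 1 \<Longrightarrow> real i powr (-p) / C \<le> \<kappa> i \<and> \<kappa> i \<le> C * real i powr (-p)"
    and C: "C \<ge> 1" and p: "p \<ge> 0" and L: "L > 0"
  shows "\<forall>c \<gamma>. c > 0 \<longrightarrow> \<gamma> > 0 \<longrightarrow>
        (\<exists>C0 > 0. \<forall>\<mu>. in_l2 \<mu> \<and> (\<forall>i \<ge> 1. \<mu> i \<ge> c * real i powr (-\<gamma> - 1/2)) \<longrightarrow>
           (\<forall>\<^sub>F n in sequentially.
              alpha_upper p \<kappa> L \<mu> n \<le> ereal (\<gamma> + C0 * ln (ln (real n)) / ln (real n))))"
proof (intro allI impI)
  fix c \<gamma> :: real
  assume c: "c > 0" and \<gamma>: "\<gamma> > 0"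
  define a1 where "a1 = 2*\<gamma> + 3 + 2*p"
  define C0 where "C0 = 2 * a1"
  define Q where "Q = C\<^sup>2 * 4 powr a1 + 1"
  have a10: "a1 > 0" unfolding a1_def using \<gamma> p by simp
  have C00: "C0 > 0" unfolding C0_def using a10 by simp
  have Q1: "Q \<ge> 1" unfolding Q_def by simp
  have ev1: "\<forall>\<^sub>F n in sequentially. real n \<ge> 3" using eventually_ge_at_top[of "3::nat"]
    by eventually_elim simp
  have ev2: "\<forall>\<^sub>F n in sequentially. ln (real n) \<ge> 1" by real_asymp
  have ev3: "\<forall>\<^sub>F n in sequentially. C0 * ln (ln (real n)) / ln (real n) \<le> 1" by real_asymp
  have ev4: "\<forall>\<^sub>F n in sequentially. c\<^sup>2 * (ln (real n))^4 / Q\<^sup>2 > L * (ln (real n))\<^sup>2"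
    using c Q1 L by real_asymp
  show "\<exists>C0 > 0. \<forall>\<mu>. in_l2 \<mu> \<and> (\<forall>i \<ge> 1. \<mu> i \<ge> c * real i powr (-\<gamma> - 1/2)) \<longrightarrow>
           (\<forall>\<^sub>F n in sequentially.
              alpha_upper p \<kappa> L \<mu> n \<le> ereal (\<gamma> + C0 * ln (ln (real n)) / ln (real n)))"
  proof (intro exI[of _ C0] conjI allI impI)
    show "C0 > 0" by (rule C00)
    fix \<mu> assume H: "in_l2 \<mu> \<and> (\<forall>i \<ge> 1. \<mu> i \<ge> c * real i powr (-\<gamma> - 1/2))"
    have l2: "in_l2 \<mu>" using H by blast
    have h\<mu>: "c * real (Suc i) powr (-\<gamma> - 1/2) \<le> \<mu> (Suc i)" for i
    proof -
      have "\<forall>i \<ge> 1. \<mu> i \<ge> c * real i powr (-\<gamma> - 1/2)" using H by blast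
      hence "\<mu> (Suc i) \<ge> c * real (Suc i) powr (-\<gamma> - 1/2)" by (erule_tac x="Suc i" in allE) simp
      thus ?thesis .
    qed
    show "\<forall>\<^sub>F n in sequentially. alpha_upper p \<kappa> L \<mu> n \<le> ereal (\<gamma> + C0 * ln (ln (real n)) / ln (real n))"
      using ev1 ev2 ev3 ev4
    proof eventually_elim
      case (elim n)
      have n3: "n \<ge> 3" using elim by linarith
      define x where "x = ln (real n)"
      define \<alpha> where "\<alpha> = \<gamma> + C0 * ln (ln (real n)) / ln (real n)"
      define a where "a = 1 + 2*\<alpha> + 2*p"
      define N where "N = real n powr (1/a)"
      define m where "m = nat \<lceil>N\<rceil>"
      have x1: "x \<ge> 1" unfolding x_def using elim by simp
      have lx: "ln x \<ge> 0" using x1 by simp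
      have d0: "C0 * ln x / x \<ge> 0" using C00 lx x1 by simp
      have d1: "C0 * ln x / x \<le> 1" using elim unfolding x_def by simp
      have \<alpha>eq: "\<alpha> = \<gamma> + C0 * ln x / x" unfolding \<alpha>_def x_def ..
      have \<alpha>\<gamma>: "\<gamma> \<le> \<alpha>" using d0 \<alpha>eq by simp
      have \<alpha>0: "\<alpha> > 0" using \<alpha>\<gamma> \<gamma> by simp
      have a0: "a > 0" unfolding a_def using \<alpha>0 p by simp
      have aa1: "a \<le> a1" unfolding a_def a1_def using d1 \<alpha>eq by simp
      have nexp: "real n = exp x" unfolding x_def using elim by simp
      have NE: "N = exp (x/a)" unfolding N_def nexp by (simp add: powr_def)
      have N1: "N \<ge> 1" unfolding NE using x1 a0 by simp
      have Na: "N powr a = real n" unfolding N_def using a0 elim by (simp add: powr_powr)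
      have lnN: "ln N = x / a" unfolding NE by simp
      have mN: "N \<le> real m" "real m \<le> N + 1" unfolding m_def using N1 by linarith+
      define B where "B = c\<^sup>2 * N powr (2*\<alpha>-2*\<gamma>) * ln N / Q\<^sup>2"
      have B0: "B \<ge> 0" unfolding B_def using N1 by simp
      have Bi: "B \<le> hs \<kappa> \<mu> n \<alpha> i" if i: "i \<in> {m..<2*m}" for i
      proof -
        define j where "j = real (Suc i)"
        have jN: "N \<le> j" unfolding j_def using i mN by simp
        have j4: "j \<le> 4*N"
        proof -
          have "Suc i \<le> 2*m" using i by simp
          hence "j \<le> 2 * real m" unfolding j_def by (metis of_nat_le_iff of_nat_mult of_nat_numeral)
          thus ?thesis using mN N1 by linarith
        qed
        have "B \<le> (real n)\<^sup>2 * j powr (1+2*\<alpha>) * (\<mu> (Suc i))\<^sup>2 * ln j / (C\<^sup>2 * j powr (1+2*\<alpha>+2*p) + real n)\<^sup>2"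
          unfolding B_def Q_def
          by (rule term_iii[OF jN N1 j4 Na[unfolded a_def] aa1[unfolded a_def] \<alpha>0 p \<alpha>\<gamma> c h\<mu>[of i, folded j_def] C])
        also have "\<dots> \<le> hs \<kappa> \<mu> n \<alpha> i" unfolding j_def using n3 by (intro hs_low[OF hk C]) auto
        finally show ?thesis .
      qed
      have "real (card {m..<2*m}) * B \<le> (\<Sum>i\<in>{m..<2*m}. hs \<kappa> \<mu> n \<alpha> i)"
        using Bi by (rule sum_bounded_below)
      hence sumB: "N * B \<le> (\<Sum>i\<in>{m..<2*m}. hs \<kappa> \<mu> n \<alpha> i)"
        using mN B0 by (simp add: mult_right_mono order_trans[OF mult_right_mono[OF mN(1) B0]])
      have pre0: "0 \<le> a / (N * x)" using a0 N1 x1 by simp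
      have "hfun p \<kappa> \<mu> n \<alpha> \<ge> a / (N * x) * (\<Sum>i\<in>{m..<2*m}. hs \<kappa> \<mu> n \<alpha> i)"
        using hfun_ge_term[OF hk C n3 p \<alpha>0 l2, of "{m..<2*m}"] unfolding a_def[symmetric] N_def[symmetric] x_def[symmetric] by simp
      moreover have "a / (N * x) * (N * B) \<le> a / (N * x) * (\<Sum>i\<in>{m..<2*m}. hs \<kappa> \<mu> n \<alpha> i)"
        using sumB pre0 by (rule mult_left_mono)
      moreover have "a / (N * x) * (N * B) = c\<^sup>2 * N powr (2*\<alpha>-2*\<gamma>) / Q\<^sup>2"
      proof -
        define P where "P = N powr (2*\<alpha>-2*\<gamma>)"
        have "a / (N * x) * (N * (c\<^sup>2 * P * (x / a) / Q\<^sup>2)) = c\<^sup>2 * P / Q\<^sup>2"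
          using a0 N1 x1 by (simp add: field_simps)
        thus ?thesis unfolding B_def lnN P_def .
      qed
      moreover have "N powr (2*\<alpha>-2*\<gamma>) \<ge> x^4"
      proof -
        have "N powr (2*\<alpha>-2*\<gamma>) = exp ((2*\<alpha>-2*\<gamma>) * (x/a))" unfolding NE by (simp add: powr_def)
        also have "(2*\<alpha>-2*\<gamma>) * (x/a) = 2*C0*ln x / a" unfolding \<alpha>eq using x1 by simp
        also have "2*C0*ln x / a \<ge> 2*C0*ln x / a1" using a0 aa1 C00 lx by (intro divide_left_mono) auto
        hence "exp (2*C0*ln x / a) \<ge> exp (4 * ln x)" unfolding C0_def using a10 by simp
        also have "exp (4 * ln x) = x^4"
        proof -
          have "x powr 4 = exp (4 * ln x)" using x1 by (simp add: powr_def)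
          moreover have "x powr 4 = x^4" using x1 by (subst powr_numeral) auto
          ultimately show ?thesis by simp
        qed
        finally show ?thesis .
      qed
      ultimately have "hfun p \<kappa> \<mu> n \<alpha> \<ge> c\<^sup>2 * x^4 / Q\<^sup>2"
        using c Q1 by (smt (verit) divide_right_mono mult_left_mono zero_le_power2)
      hence hb: "hfun p \<kappa> \<mu> n \<alpha> > L * (ln (real n))\<^sup>2" using elim unfolding x_def by simp
      have "alpha_upper p \<kappa> L \<mu> n \<le> ereal \<alpha>"
        unfolding alpha_upper_def using \<alpha>0 hb by (intro Inf_lower) auto
      thus ?case unfolding \<alpha>_def .
    qed
  qed
qed

theorem lemma2p1:
  fixes p C l L :: real and \<kappa> \<mu>0 :: "nat \<Rightarrow> real"
  assumes hp: "p \<ge> 0"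
    and hC: "C \<ge> 1"
    and h\<kappa>: "\<And>i. i \<ge> 1 \<Longrightarrow> real i powr (-p) / C \<le> \<kappa> i \<and> \<kappa> i \<le> C * real i powr (-p)"
    and h\<mu>0: "in_l2 \<mu>0"
    and hl: "l > 0" and hL: "L > 0"
  shows
    "(\<forall>\<beta> R. \<beta> > 0 \<longrightarrow> R > 0 \<longrightarrow>
        (\<exists>c0 > 0. \<forall>\<^sub>F n in sequentially.
           \<forall>\<mu>. in_l2 \<mu> \<and> sobolev_finite \<beta> \<mu> \<and> sobolev_norm \<beta> \<mu> \<le> R \<longrightarrow>
             alpha_lower p \<kappa> l \<mu> n \<ge> ereal (\<beta> - c0 / ln (real n))))
   \<and> (\<forall>\<gamma> R. \<gamma> > 0 \<longrightarrow> R > 0 \<longrightarrow>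
        (\<forall>\<^sub>F n in sequentially.
           \<forall>\<mu>. in_l2 \<mu> \<and> analytic_finite \<gamma> \<mu> \<and> analytic_norm \<gamma> \<mu> \<le> R \<longrightarrow>
             alpha_lower p \<kappa> l \<mu> n \<ge> ereal (sqrt (ln (real n)) / ln (ln (real n)))))
   \<and> (\<forall>c \<gamma>. c > 0 \<longrightarrow> \<gamma> > 0 \<longrightarrow>
        (\<exists>C0 > 0. \<forall>\<mu>. in_l2 \<mu> \<and> (\<forall>i \<ge> 1. \<mu> i \<ge> c * real i powr (-\<gamma> - 1/2)) \<longrightarrow>
           (\<forall>\<^sub>F n in sequentially.
              alpha_upper p \<kappa> L \<mu> n \<le> ereal (\<gamma> + C0 * ln (ln (real n)) / ln (real n)))))
   \<and> ((\<exists>i \<ge> 2. \<mu>0 i \<noteq> 0) \<longrightarrow>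
        (\<forall>\<^sub>F n in sequentially.
           alpha_upper p \<kappa> L \<mu>0 n \<le> ereal (ln (real n) / (2 * ln 2) - 1/2 - p)))"
proof (intro conjI)
  show "\<forall>\<beta> R. \<beta> > 0 \<longrightarrow> R > 0 \<longrightarrow>
        (\<exists>c0 > 0. \<forall>\<^sub>F n in sequentially.
           \<forall>\<mu>. in_l2 \<mu> \<and> sobolev_finite \<beta> \<mu> \<and> sobolev_norm \<beta> \<mu> \<le> R \<longrightarrow>
             alpha_lower p \<kappa> l \<mu> n \<ge> ereal (\<beta> - c0 / ln (real n)))"
    by (rule part_i[OF h\<kappa> hC hp hl])
  show "\<forall>\<gamma> R. \<gamma> > 0 \<longrightarrow> R > 0 \<longrightarrow>
        (\<forall>\<^sub>F n in sequentially.
           \<forall>\<mu>. in_l2 \<mu> \<and> analytic_finite \<gamma> \<mu> \<and> analytic_norm \<gamma> \<mu> \<le> R \<longrightarrow>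
             alpha_lower p \<kappa> l \<mu> n \<ge> ereal (sqrt (ln (real n)) / ln (ln (real n))))"
    by (rule part_ii[OF h\<kappa> hC hp hl])
  show "\<forall>c \<gamma>. c > 0 \<longrightarrow> \<gamma> > 0 \<longrightarrow>
        (\<exists>C0 > 0. \<forall>\<mu>. in_l2 \<mu> \<and> (\<forall>i \<ge> 1. \<mu> i \<ge> c * real i powr (-\<gamma> - 1/2)) \<longrightarrow>
           (\<forall>\<^sub>F n in sequentially.
              alpha_upper p \<kappa> L \<mu> n \<le> ereal (\<gamma> + C0 * ln (ln (real n)) / ln (real n))))"
    by (rule part_iii[OF h\<kappa> hC hp hL])
  show "(\<exists>i \<ge> 2. \<mu>0 i \<noteq> 0) \<longrightarrow>
        (\<forall>\<^sub>F n in sequentially.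
           alpha_upper p \<kappa> L \<mu>0 n \<le> ereal (ln (real n) / (2 * ln 2) - 1/2 - p))"
    by (rule part_iv[OF h\<kappa> hC hp hL h\<mu>0])
qed

end
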